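(* Let $p=p(n)$ and $G\in\mathcal G(n,p)$. If $p=o(n^{-5/4})$, then with high probability $G$ is reconstructible from its $2$-neighbourhoods.
   Context: $\mathcal G(n,p)$ is the Erdős–Rényi random graph on vertex set $[n]$ in which each pair is an edge independently with probability $p$. "With high probability" means with probability tending to $1$ as $n\to\infty$. For a graph $G$, a vertex $v$ and an integer $r\ge1$, the $r$-neighbourhood $N_r^{(G)}(v)$ is the subgraph of $G$ induced by the vertices at distance at most $r$ from $v$, considered as a graph rooted at $v$. Graphs $G$ and $H$ have isomorphic $r$-neighbourhoods if there is a bijection $\phi:V(G)\to V(H)$ such that for every $v\in V(G)$ there is a graph isomorphism $N_r^{(G)}(v)\to N_r^{(H)}(\phi(v))$ mapping $v$ to $\phi(v)$. $G$ is reconstructible from its $r$-neighbourhoods if every graph $H$ with $r$-neighbourhoods isomorphic to those of $G$ is isomorphic to $G$. *)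

theory Defs
  imports Complex_Main "HOL-Library.Landau_Symbols"
begin

definition all_edges :: "nat \<Rightarrow> nat set set" where
  "all_edges n = {e. e \<subseteq> {..<n} \<and> card e = 2}"

definition graphs_on :: "nat \<Rightarrow> nat set set set" where
  "graphs_on n = Pow (all_edges n)"

definition gnp_prob :: "nat \<Rightarrow> real \<Rightarrow> (nat set set \<Rightarrow> bool) \<Rightarrow> real" where
  "gnp_prob n p P =
     (\<Sum>E\<in>graphs_on n. if P E then p ^ card E * (1 - p) ^ (card (all_edges n) - card E) else 0)"

fun ball :: "nat set set \<Rightarrow> nat \<Rightarrow> nat \<Rightarrow> nat set" where
  "ball E 0 v = {v}"
| "ball E (Suc r) v = ball E r v \<union> {u. \<exists>w\<in>ball E r v. {w, u} \<in> E}"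

definition nbhd_iso :: "nat set set \<Rightarrow> nat set set \<Rightarrow> nat \<Rightarrow> nat \<Rightarrow> nat \<Rightarrow> bool" where
  "nbhd_iso G H r v w \<longleftrightarrow>
     (\<exists>f. bij_betw f (ball G r v) (ball H r w) \<and> f v = w \<and>
          (\<forall>x\<in>ball G r v. \<forall>y\<in>ball G r v. {x, y} \<in> G \<longleftrightarrow> {f x, f y} \<in> H))"

definition same_nbhds :: "nat \<Rightarrow> nat \<Rightarrow> nat set set \<Rightarrow> nat set set \<Rightarrow> bool" where
  "same_nbhds n r G H \<longleftrightarrow>
     (\<exists>\<phi>. bij_betw \<phi> {..<n} {..<n} \<and> (\<forall>v\<in>{..<n}. nbhd_iso G H r v (\<phi> v)))"

definition graph_iso :: "nat \<Rightarrow> nat set set \<Rightarrow> nat set set \<Rightarrow> bool" where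
  "graph_iso n G H \<longleftrightarrow>
     (\<exists>f. bij_betw f {..<n} {..<n} \<and>
          (\<forall>x\<in>{..<n}. \<forall>y\<in>{..<n}. {x, y} \<in> G \<longleftrightarrow> {f x, f y} \<in> H))"

text \<open>Every graph H with the
  same r-neighbourhoods has n vertices, hence is isomorphic to a graph on [n];
  as all notions are isomorphism-invariant it suffices to quantify over graphs on [n].\<close>

definition reconstructible :: "nat \<Rightarrow> nat \<Rightarrow> nat set set \<Rightarrow> bool" where
  "reconstructible n r G \<longleftrightarrow>
     (\<forall>H\<in>graphs_on n. same_nbhds n r G H \<longrightarrow> graph_iso n G H)"

end

theory Submission
  imports Defs "HOL-Combinatorics.Transposition" "HOL-Library.FuncSet"
begin


definition good :: "nat set set \<Rightarrow> bool" where
  "good E \<longleftrightarrow> (\<forall>v. finite (ball E 2 v) \<and> card (ball E 2 v) \<le> 4)"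

definition wfg :: "nat set set \<Rightarrow> nat set \<Rightarrow> bool" where
  "wfg E V \<longleftrightarrow> (\<forall>e\<in>E. e \<subseteq> V \<and> card e = 2)"

definition crit :: "nat set set \<Rightarrow> nat \<Rightarrow> bool" where
  "crit E w \<longleftrightarrow> card (ball E 2 w) = 4 \<or> (\<forall>x\<in>ball E 2 w. x = w \<or> {w,x} \<in> E)"

definition closedS :: "nat set set \<Rightarrow> nat set \<Rightarrow> bool" where
  "closedS E S \<longleftrightarrow> (\<forall>x\<in>S. \<forall>y. {x,y} \<in> E \<longrightarrow> y \<in> S)"

lemma ball_self: "v \<in> ball E r v"
  by (induction r) auto

lemma mem_ball2: "x \<in> ball E 2 v \<longleftrightarrow> x = v \<or> {v,x} \<in> E \<or> (\<exists>u. {v,u} \<in> E \<and> {u,x} \<in> E)"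
  by (auto simp: numeral_2_eq_2)

lemma edge_neq: "wfg E V \<Longrightarrow> {a,b} \<in> E \<Longrightarrow> a \<noteq> b"
  unfolding wfg_def by fastforce

lemma edge_in: "wfg E V \<Longrightarrow> {a,b} \<in> E \<Longrightarrow> a \<in> V \<and> b \<in> V"
  unfolding wfg_def by blast

lemma ball_subset_V: "wfg E V \<Longrightarrow> v \<in> V \<Longrightarrow> ball E r v \<subseteq> V"
  by (induction r) (auto dest: edge_in)

lemma ball_mono_E: "E' \<subseteq> E \<Longrightarrow> ball E' r v \<subseteq> ball E r v"
  by (induction r) auto

lemma ball_isolated: "(\<forall>e\<in>E. v \<notin> e) \<Longrightarrow> ball E r v = {v}"
  by (induction r) auto

lemma keyL:
  assumes wf: "wfg E V" and fin: "finite (ball E 2 w)" and c4: "card (ball E 2 w) \<le> 4"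
    and wa: "{w,a} \<in> E" and ax: "{a,x} \<in> E" and xw: "x \<noteq> w" and wx: "{w,x} \<notin> E"
  shows "ball E 2 w \<subseteq> ball E 2 a"
proof
  fix z assume z: "z \<in> ball E 2 w"
  have aw: "{a,w} \<in> E" using wa by (simp add: insert_commute)
  show "z \<in> ball E 2 a"
  proof (cases "z = w \<or> {w,z} \<in> E \<or> {a,z} \<in> E \<or> z = x \<or> z = a")
    case True
    then show ?thesis using aw ax unfolding mem_ball2 by blast
  next
    case False
    then obtain u where u: "{w,u} \<in> E" "{u,z} \<in> E" using z unfolding mem_ball2 by blast
    have ua: "u \<noteq> a" using False u by blast
    have d: "w \<noteq> a" "w \<noteq> x" "w \<noteq> u" "w \<noteq> z" "a \<noteq> x" "a \<noteq> u" "a \<noteq> z" "x \<noteq> u" "x \<noteq> z" "u \<noteq> z"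
      using edge_neq[OF wf wa] xw edge_neq[OF wf u(1)] False wa wx u ua by auto
    have sub: "{w,a,x,u,z} \<subseteq> ball E 2 w" using wa ax u z by (auto simp: mem_ball2)
    have "card {w,a,x,u,z} = 5" using d by simp
    moreover have "card {w,a,x,u,z} \<le> card (ball E 2 w)" by (rule card_mono[OF fin sub])
    ultimately show ?thesis using c4 by simp
  qed
qed

lemma crit_closed:
  assumes wf: "wfg E V" and g: "good E" and c: "crit E w"
  shows "closedS E (ball E 2 w)"
  unfolding closedS_def
proof (intro ballI allI impI)
  fix x y assume x: "x \<in> ball E 2 w" and xy: "{x,y} \<in> E"
  show "y \<in> ball E 2 w"
  proof (rule ccontr)
    assume y: "y \<notin> ball E 2 w"
    have xw: "x \<noteq> w" using xy y unfolding mem_ball2 by blast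
    have wx: "{w,x} \<notin> E" using xy y unfolding mem_ball2 by blast
    obtain a where wa: "{w,a} \<in> E" and ax: "{a,x} \<in> E" using x xw wx unfolding mem_ball2 by blast
    have c4: "card (ball E 2 w) = 4" using c x xw wx unfolding crit_def by blast
    have fin: "finite (ball E 2 w)" using g unfolding good_def by blast
    have sub: "ball E 2 w \<subseteq> ball E 2 a" using keyL[OF wf fin _ wa ax xw wx] c4 by simp
    have "y \<in> ball E 2 a" using ax xy unfolding mem_ball2 by blast
    hence "insert y (ball E 2 w) \<subseteq> ball E 2 a" using sub by blast
    moreover have "finite (ball E 2 a)" "card (ball E 2 a) \<le> 4" using g unfolding good_def by blast+
    ultimately have "card (insert y (ball E 2 w)) \<le> 4" using card_mono order_trans by blast
    then show False using c4 y fin by simp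
  qed
qed

lemma exists_crit:
  assumes fV: "finite V" and ne: "V \<noteq> {}" and wf: "wfg E V" and g: "good E"
  shows "\<exists>c\<in>V. crit E c"
proof -
  define m where "m = Max ((\<lambda>v. card (ball E 2 v)) ` V)"
  have "m \<in> (\<lambda>v. card (ball E 2 v)) ` V"
    using Max_in[of "(\<lambda>v. card (ball E 2 v)) ` V"] fV ne unfolding m_def by auto
  then obtain w where w: "w \<in> V" "card (ball E 2 w) = m" by auto
  have mx: "\<And>v. v \<in> V \<Longrightarrow> card (ball E 2 v) \<le> m" unfolding m_def using fV by simp
  show ?thesis
  proof (cases "crit E w")
    case True then show ?thesis using w by blast
  next
    case False
    then obtain x where x: "x \<in> ball E 2 w" "x \<noteq> w" "{w,x} \<notin> E" and c4: "card (ball E 2 w) \<noteq> 4"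
      unfolding crit_def by blast
    obtain a where wa: "{w,a} \<in> E" and ax: "{a,x} \<in> E" using x unfolding mem_ball2 by blast
    have fin: "finite (ball E 2 w)" and le: "card (ball E 2 w) \<le> 4" using g unfolding good_def by blast+
    have sub: "ball E 2 w \<subseteq> ball E 2 a" using keyL[OF wf fin le wa ax x(2,3)] .
    have aV: "a \<in> V" using edge_in[OF wf wa] by blast
    have fina: "finite (ball E 2 a)" using g unfolding good_def by blast
    have eq: "ball E 2 w = ball E 2 a"
      using card_subset_eq[OF fina sub] mx[OF aV] w(2) card_mono[OF fina sub] by simp
    have d: "w \<noteq> a" "w \<noteq> x" "a \<noteq> x" using edge_neq[OF wf wa] edge_neq[OF wf ax] x by auto
    have s3: "{w,a,x} \<subseteq> ball E 2 w" using wa ax by (auto simp: mem_ball2)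
    have "card {w,a,x} = 3" using d by simp
    hence "card (ball E 2 w) \<ge> 3" using card_mono[OF fin s3] by simp
    hence "card (ball E 2 w) = 3" using le c4 by simp
    hence b3: "ball E 2 w = {w,a,x}" using card_subset_eq[OF fin s3] \<open>card {w,a,x} = 3\<close> by simp
    have "crit E a" unfolding crit_def
      using b3 eq wa ax by (auto simp: insert_commute)
    then show ?thesis using aV by blast
  qed
qed

lemma crit_transfer:
  assumes "nbhd_iso G H 2 v w" "crit G v"
  shows "crit H w"
proof -
  obtain f where f: "bij_betw f (ball G 2 v) (ball H 2 w)" "f v = w"
    "\<forall>x\<in>ball G 2 v. \<forall>y\<in>ball G 2 v. {x, y} \<in> G \<longleftrightarrow> {f x, f y} \<in> H"
    using assms(1) unfolding nbhd_iso_def by blast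
  have cd: "card (ball H 2 w) = card (ball G 2 v)" using bij_betw_same_card[OF f(1)] by simp
  show ?thesis
  proof (cases "card (ball G 2 v) = 4")
    case True then show ?thesis using cd unfolding crit_def by simp
  next
    case False
    hence A: "\<forall>x\<in>ball G 2 v. x = v \<or> {v,x} \<in> G" using assms(2) unfolding crit_def by blast
    have "\<forall>x\<in>ball H 2 w. x = w \<or> {w,x} \<in> H"
    proof
      fix x assume "x \<in> ball H 2 w"
      then obtain y where y: "y \<in> ball G 2 v" "x = f y" using f(1) unfolding bij_betw_def by blast
      show "x = w \<or> {w,x} \<in> H" using A y f(2) f(3) ball_self[of v G 2] by metis
    qed
    then show ?thesis unfolding crit_def by blast
  qed
qed



lemma iso_ball:
  assumes bij: "bij_betw g C D" and iso: "\<forall>x\<in>C. \<forall>y\<in>C. {x,y} \<in> G \<longleftrightarrow> {g x, g y} \<in> H"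
    and cG: "closedS G C" and cH: "closedS H D" and v: "v \<in> C"
  shows "g ` ball G r v = ball H r (g v) \<and> ball G r v \<subseteq> C"
proof (induction r)
  case 0 then show ?case using v by simp
next
  case (Suc r)
  let ?B = "ball G r v"
  have BC: "?B \<subseteq> C" and im: "g ` ?B = ball H r (g v)" using Suc by auto
  have N: "{u. \<exists>w\<in>?B. {w,u} \<in> G} \<subseteq> C" using BC cG unfolding closedS_def by blast
  have "g ` {u. \<exists>w\<in>?B. {w,u} \<in> G} = {u. \<exists>w\<in>ball H r (g v). {w,u} \<in> H}"
  proof
    show "g ` {u. \<exists>w\<in>?B. {w,u} \<in> G} \<subseteq> {u. \<exists>w\<in>ball H r (g v). {w,u} \<in> H}"
    proof
      fix u' assume "u' \<in> g ` {u. \<exists>w\<in>?B. {w,u} \<in> G}"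
      then obtain u w where u: "u' = g u" "w \<in> ?B" "{w,u} \<in> G" by blast
      have "u \<in> C" using N u by blast
      then have "{g w, g u} \<in> H" using iso u BC by blast
      then show "u' \<in> {u. \<exists>w\<in>ball H r (g v). {w,u} \<in> H}" using u im by blast
    qed
  next
    show "{u. \<exists>w\<in>ball H r (g v). {w,u} \<in> H} \<subseteq> g ` {u. \<exists>w\<in>?B. {w,u} \<in> G}"
    proof
      fix u' assume "u' \<in> {u. \<exists>w\<in>ball H r (g v). {w,u} \<in> H}"
      then obtain w' where w': "w' \<in> ball H r (g v)" "{w',u'} \<in> H" by blast
      obtain w where w: "w \<in> ?B" "w' = g w" using w' im by blast
      have "w' \<in> D" using w BC bij unfolding bij_betw_def by blast
      hence "u' \<in> D" using cH w' unfolding closedS_def by blast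
      then obtain u where u: "u \<in> C" "u' = g u" using bij unfolding bij_betw_def by blast
      have "{w,u} \<in> G" using iso u w w' BC by blast
      then show "u' \<in> g ` {u. \<exists>w\<in>?B. {w,u} \<in> G}" using u w by blast
    qed
  qed
  then show ?case using im BC N by (simp add: image_Un)
qed

lemma iso_nbhd:
  assumes bij: "bij_betw g C D" and iso: "\<forall>x\<in>C. \<forall>y\<in>C. {x,y} \<in> G \<longleftrightarrow> {g x, g y} \<in> H"
    and cG: "closedS G C" and cH: "closedS H D" and v: "v \<in> C"
  shows "nbhd_iso G H r v (g v)"
proof -
  have a: "g ` ball G r v = ball H r (g v)" "ball G r v \<subseteq> C" using iso_ball[OF assms] by auto
  have "bij_betw g (ball G r v) (ball H r (g v))" using bij_betw_subset[OF bij a(2) a(1)] .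
  then show ?thesis unfolding nbhd_iso_def using a(2) iso by blast
qed

lemma nbhd_difun:
  assumes "nbhd_iso G H r v w" "nbhd_iso G H r v' w" "nbhd_iso G H r v' w'"
  shows "nbhd_iso G H r v w'"
proof -
  obtain f1 where f1: "bij_betw f1 (ball G r v) (ball H r w)" "f1 v = w"
    "\<forall>x\<in>ball G r v. \<forall>y\<in>ball G r v. {x, y} \<in> G \<longleftrightarrow> {f1 x, f1 y} \<in> H"
    using assms(1) unfolding nbhd_iso_def by blast
  obtain f2 where f2: "bij_betw f2 (ball G r v') (ball H r w)" "f2 v' = w"
    "\<forall>x\<in>ball G r v'. \<forall>y\<in>ball G r v'. {x, y} \<in> G \<longleftrightarrow> {f2 x, f2 y} \<in> H"
    using assms(2) unfolding nbhd_iso_def by blast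
  obtain f3 where f3: "bij_betw f3 (ball G r v') (ball H r w')" "f3 v' = w'"
    "\<forall>x\<in>ball G r v'. \<forall>y\<in>ball G r v'. {x, y} \<in> G \<longleftrightarrow> {f3 x, f3 y} \<in> H"
    using assms(3) unfolding nbhd_iso_def by blast
  define k where "k = inv_into (ball G r v') f2"
  have kb: "bij_betw k (ball H r w) (ball G r v')" unfolding k_def by (rule bij_betw_inv_into[OF f2(1)])
  have kf: "\<And>y. y \<in> ball H r w \<Longrightarrow> f2 (k y) = y" unfolding k_def
    using f2(1) by (simp add: bij_betw_def f_inv_into_f)
  have kv: "k w = v'" unfolding k_def using f2 ball_self[of v' G r]
    by (metis bij_betw_def inv_into_f_f)
  define h where "h = f3 \<circ> k \<circ> f1"
  have hb: "bij_betw h (ball G r v) (ball H r w')" unfolding h_def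
    using bij_betw_trans[OF bij_betw_trans[OF f1(1) kb] f3(1)] by (simp add: comp_assoc)
  have hv: "h v = w'" unfolding h_def using f1(2) kv f3(2) by simp
  have "\<forall>x\<in>ball G r v. \<forall>y\<in>ball G r v. {x, y} \<in> G \<longleftrightarrow> {h x, h y} \<in> H"
  proof (intro ballI)
    fix x y assume x: "x \<in> ball G r v" and y: "y \<in> ball G r v"
    have fx: "f1 x \<in> ball H r w" "f1 y \<in> ball H r w" using f1(1) x y unfolding bij_betw_def by auto
    have kx: "k (f1 x) \<in> ball G r v'" "k (f1 y) \<in> ball G r v'" using kb fx unfolding bij_betw_def by auto
    have "{x, y} \<in> G \<longleftrightarrow> {f1 x, f1 y} \<in> H" using f1(3) x y by blast
    also have "\<dots> \<longleftrightarrow> {f2 (k (f1 x)), f2 (k (f1 y))} \<in> H" using kf fx by simp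
    also have "\<dots> \<longleftrightarrow> {k (f1 x), k (f1 y)} \<in> G" using f2(3) kx by blast
    also have "\<dots> \<longleftrightarrow> {h x, h y} \<in> H" using f3(3) kx unfolding h_def by simp
    finally show "{x, y} \<in> G \<longleftrightarrow> {h x, h y} \<in> H" .
  qed
  then show ?thesis unfolding nbhd_iso_def using hb hv by blast
qed

lemma restrict_ball:
  assumes cG: "closedS G C" and v: "v \<notin> C"
  shows "ball {e\<in>G. e \<inter> C = {}} r v = ball G r v \<and> ball G r v \<inter> C = {}"
proof (induction r)
  case 0 then show ?case using v by simp
next
  case (Suc r)
  have A: "\<And>w u. w \<in> ball G r v \<Longrightarrow> {w,u} \<in> G \<Longrightarrow> u \<notin> C"
  proof
    fix w u assume "w \<in> ball G r v" "{w,u} \<in> G" "u \<in> C"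
    then have "w \<in> C" using cG unfolding closedS_def by (metis insert_commute)
    then show False using Suc \<open>w \<in> ball G r v\<close> by blast
  qed
  have "{u. \<exists>w\<in>ball G r v. {w,u} \<in> {e\<in>G. e \<inter> C = {}}} = {u. \<exists>w\<in>ball G r v. {w,u} \<in> G}"
    using A Suc by blast
  then show ?case using Suc A by auto
qed

lemma swap_lemma:
  assumes fC: "finite C"
    and difun: "\<forall>v v' w w'. R v w \<longrightarrow> R v' w \<longrightarrow> R v' w' \<longrightarrow> R v w'"
  shows "C \<subseteq> V1 \<Longrightarrow> bij_betw \<phi> V1 V2 \<Longrightarrow> (\<forall>v\<in>V1. R v (\<phi> v)) \<Longrightarrow> inj_on g C \<Longrightarrow> g ` C \<subseteq> V2
    \<Longrightarrow> (\<forall>v\<in>C. R v (g v)) \<Longrightarrow> \<exists>\<psi>. bij_betw \<psi> V1 V2 \<and> (\<forall>v\<in>V1. R v (\<psi> v)) \<and> (\<forall>v\<in>C. \<psi> v = g v)"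
  using fC
proof (induction C rule: finite_induct)
  case empty then show ?case by blast
next
  case (insert c F)
  obtain \<psi>0 where p0: "bij_betw \<psi>0 V1 V2" "\<forall>v\<in>V1. R v (\<psi>0 v)" "\<forall>v\<in>F. \<psi>0 v = g v"
    using insert by auto
  have cV: "c \<in> V1" using insert by auto
  have gc: "g c \<in> V2" using insert by auto
  obtain c' where c': "c' \<in> V1" "\<psi>0 c' = g c" using p0(1) gc unfolding bij_betw_def by (metis imageE)
  have c'F: "c' \<notin> F"
  proof
    assume "c' \<in> F"
    then have "g c' = g c" using p0(3) c' by simp
    then show False using insert.prems(4) insert(2) \<open>c' \<in> F\<close> unfolding inj_on_def by blast
  qed
  define \<psi> where "\<psi> = \<psi>0 \<circ> Transposition.transpose c c'"
  have b: "bij_betw \<psi> V1 V2" unfolding \<psi>_def using bij_betw_swap_iff[OF cV c'(1), of \<psi>0 V2] p0(1) by blast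
  have Rc'c: "R c' (\<psi>0 c)" using difun[rule_format, of c' "g c" c "\<psi>0 c"] c' p0(2) cV insert.prems(6) by (metis insertI1)
  have R: "\<forall>v\<in>V1. R v (\<psi> v)"
  proof
    fix v assume v: "v \<in> V1"
    show "R v (\<psi> v)"
    proof (cases "v = c")
      case True then show ?thesis unfolding \<psi>_def using c' insert.prems(6) by simp
    next
      case False
      then show ?thesis
      proof (cases "v = c'")
        case True then show ?thesis unfolding \<psi>_def using Rc'c by simp
      next
        case False then show ?thesis unfolding \<psi>_def using \<open>v \<noteq> c\<close> p0(2) v by simp
      qed
    qed
  qed
  have E: "\<forall>v\<in>insert c F. \<psi> v = g v"
    unfolding \<psi>_def using c' p0(3) c'F insert(2) by (auto simp: transpose_def)
  show ?case using b R E by blast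
qed



lemma good_mono: "good E \<Longrightarrow> E' \<subseteq> E \<Longrightarrow> good E'"
  unfolding good_def
proof (intro allI conjI)
  fix v assume g: "\<forall>v. finite (ball E 2 v) \<and> card (ball E 2 v) \<le> 4" and s: "E' \<subseteq> E"
  have sub: "ball E' 2 v \<subseteq> ball E 2 v" by (rule ball_mono_E[OF s])
  show "finite (ball E' 2 v)" using g sub finite_subset by blast
  have f: "finite (ball E 2 v)" and c: "card (ball E 2 v) \<le> 4" using g by auto
  show "card (ball E' 2 v) \<le> 4" using c card_mono[OF f sub] by linarith
qed
lemma main_recon:
  "finite V1 \<Longrightarrow> wfg G V1 \<Longrightarrow> wfg H V2 \<Longrightarrow> good G \<Longrightarrow> good H \<Longrightarrow> bij_betw \<phi> V1 V2 \<Longrightarrow>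
   (\<forall>v\<in>V1. nbhd_iso G H 2 v (\<phi> v)) \<Longrightarrow>
   \<exists>f. bij_betw f V1 V2 \<and> (\<forall>x\<in>V1. \<forall>y\<in>V1. {x,y} \<in> G \<longleftrightarrow> {f x, f y} \<in> H)"
proof (induction "card V1" arbitrary: V1 V2 G H \<phi> rule: less_induct)
  case less
  note fV = less.prems(1) and wG = less.prems(2) and wH = less.prems(3) and gG = less.prems(4)
    and gH = less.prems(5) and b\<phi> = less.prems(6) and n\<phi> = less.prems(7)
  show ?case
  proof (cases "V1 = {}")
    case True
    then have "V2 = {}" using b\<phi> unfolding bij_betw_def by simp
    then show ?thesis using True by (auto simp: bij_betw_def)
  next
    case False
    obtain c where cV: "c \<in> V1" and cc: "crit G c" using exists_crit[OF fV False wG gG] by blast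
    define C where "C = ball G 2 c"
    define w where "w = \<phi> c"
    define D where "D = ball H 2 w"
    have wV: "w \<in> V2" using b\<phi> cV unfolding w_def bij_betw_def by blast
    have ncw: "nbhd_iso G H 2 c w" using n\<phi> cV unfolding w_def by blast
    obtain g where g: "bij_betw g C D" "g c = w" "\<forall>x\<in>C. \<forall>y\<in>C. {x, y} \<in> G \<longleftrightarrow> {g x, g y} \<in> H"
      using ncw unfolding nbhd_iso_def C_def D_def by blast
    have cw: "crit H w" using crit_transfer[OF ncw cc] .
    have clC: "closedS G C" unfolding C_def by (rule crit_closed[OF wG gG cc])
    have clD: "closedS H D" unfolding D_def by (rule crit_closed[OF wH gH cw])
    have CV: "C \<subseteq> V1" unfolding C_def using ball_subset_V[OF wG cV] .
    have DV: "D \<subseteq> V2" unfolding D_def using ball_subset_V[OF wH wV] .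
    have fC: "finite C" using CV fV finite_subset by blast
    have cC: "c \<in> C" unfolding C_def by (rule ball_self)
    have gCD: "g ` C = D" using g(1) unfolding bij_betw_def by blast
    have inj: "inj_on g C" using g(1) unfolding bij_betw_def by blast
    have gsub: "g ` C \<subseteq> V2" using gCD DV by blast
    have dif: "\<forall>v v' w w'. nbhd_iso G H 2 v w \<longrightarrow> nbhd_iso G H 2 v' w \<longrightarrow> nbhd_iso G H 2 v' w' \<longrightarrow> nbhd_iso G H 2 v w'"
      using nbhd_difun by blast
    have Rg: "\<forall>v\<in>C. nbhd_iso G H 2 v (g v)" using iso_nbhd[OF g(1) g(3) clC clD] by blast
    obtain \<psi> where \<psi>: "bij_betw \<psi> V1 V2" "\<forall>v\<in>V1. nbhd_iso G H 2 v (\<psi> v)" "\<forall>v\<in>C. \<psi> v = g v"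
      using swap_lemma[of C "\<lambda>v w. nbhd_iso G H 2 v w" V1 \<phi> V2 g, OF fC dif CV b\<phi> n\<phi> inj gsub Rg] by blast
    have \<psi>C: "\<psi> ` C = D" unfolding gCD[symmetric] by (rule image_cong[OF refl]) (simp add: \<psi>(3))
    have \<psi>img: "\<psi> ` (V1 - C) = V2 - D"
    proof -
      have i: "inj_on \<psi> V1" and im: "\<psi> ` V1 = V2" using \<psi>(1) unfolding bij_betw_def by auto
      show ?thesis using inj_on_image_set_diff[OF i _ CV, of V1] im \<psi>C by simp
    qed
    have b\<psi>: "bij_betw \<psi> (V1 - C) (V2 - D)" by (rule bij_betw_subset[OF \<psi>(1) _ \<psi>img]) simp
    define G' where "G' = {e\<in>G. e \<inter> C = {}}"
    define H' where "H' = {e\<in>H. e \<inter> D = {}}"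
    have wG': "wfg G' (V1 - C)" using wG unfolding wfg_def G'_def by auto
    have wH': "wfg H' (V2 - D)" using wH unfolding wfg_def H'_def by auto
    have gG': "good G'" by (rule good_mono[OF gG]) (auto simp: G'_def)
    have gH': "good H'" by (rule good_mono[OF gH]) (auto simp: H'_def)
    have n\<psi>: "\<forall>v\<in>V1 - C. nbhd_iso G' H' 2 v (\<psi> v)"
    proof
      fix v assume v: "v \<in> V1 - C"
      have pv: "\<psi> v \<in> V2 - D" using b\<psi> v unfolding bij_betw_def by blast
      obtain f where f: "bij_betw f (ball G 2 v) (ball H 2 (\<psi> v))" "f v = \<psi> v"
        "\<forall>x\<in>ball G 2 v. \<forall>y\<in>ball G 2 v. {x, y} \<in> G \<longleftrightarrow> {f x, f y} \<in> H"
        using \<psi>(2) v unfolding nbhd_iso_def by blast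
      have r1: "ball G' 2 v = ball G 2 v" "ball G 2 v \<inter> C = {}"
        using restrict_ball[OF clC, of v 2] v unfolding G'_def by auto
      have r2: "ball H' 2 (\<psi> v) = ball H 2 (\<psi> v)" "ball H 2 (\<psi> v) \<inter> D = {}"
        using restrict_ball[OF clD, of "\<psi> v" 2] pv unfolding H'_def by auto
      have fin: "\<forall>x\<in>ball G 2 v. f x \<in> ball H 2 (\<psi> v)" using f(1) unfolding bij_betw_def by blast
      have "\<forall>x\<in>ball G 2 v. \<forall>y\<in>ball G 2 v. {x, y} \<in> G' \<longleftrightarrow> {f x, f y} \<in> H'"
      proof (intro ballI)
        fix x y assume x: "x \<in> ball G 2 v" and y: "y \<in> ball G 2 v"
        have "{x,y} \<inter> C = {}" using x y r1 by blast
        moreover have "{f x, f y} \<inter> D = {}" using x y fin r2 by blast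
        ultimately show "{x, y} \<in> G' \<longleftrightarrow> {f x, f y} \<in> H'" unfolding G'_def H'_def using f(3) x y by blast
      qed
      then show "nbhd_iso G' H' 2 v (\<psi> v)" unfolding nbhd_iso_def r1 r2 using f(1,2) by blast
    qed
    have lt: "card (V1 - C) < card V1"
      using cC cV fV by (metis Diff_iff card_mono Diff_subset finite_subset psubset_card_mono psubsetI)
    have fD: "finite (V1 - C)" using fV by simp
    obtain f' where f': "bij_betw f' (V1 - C) (V2 - D)"
      "\<forall>x\<in>V1 - C. \<forall>y\<in>V1 - C. {x,y} \<in> G' \<longleftrightarrow> {f' x, f' y} \<in> H'"
      using less.hyps[OF lt fD wG' wH' gG' gH' b\<psi> n\<psi>] by blast
    define F where "F = (\<lambda>x. if x \<in> C then g x else f' x)"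
    have b1: "bij_betw F C D"
    proof -
      have "bij_betw F C D = bij_betw g C D" by (rule bij_betw_cong) (simp add: F_def)
      then show ?thesis using g(1) by simp
    qed
    have b2: "bij_betw F (V1 - C) (V2 - D)"
    proof -
      have "bij_betw F (V1 - C) (V2 - D) = bij_betw f' (V1 - C) (V2 - D)" by (rule bij_betw_cong) (simp add: F_def)
      then show ?thesis using f'(1) by simp
    qed
    have bF: "bij_betw F V1 V2"
      using bij_betw_combine[OF b1 b2] CV DV by (simp add: Un_absorb1 Un_Diff_cancel)
    have "\<forall>x\<in>V1. \<forall>y\<in>V1. {x,y} \<in> G \<longleftrightarrow> {F x, F y} \<in> H"
    proof (intro ballI)
      fix x y assume x: "x \<in> V1" and y: "y \<in> V1"
      have mixed: "{a,b} \<notin> G \<and> {F a, F b} \<notin> H" if a: "a \<in> C" and bb: "b \<in> V1 - C" for a b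
      proof
        show "{a,b} \<notin> G" using clC a bb unfolding closedS_def by blast
        have "F a \<in> D" using a g(1) unfolding F_def bij_betw_def by auto
        moreover have "F b \<in> V2 - D" using bb f'(1) unfolding F_def bij_betw_def by auto
        ultimately show "{F a, F b} \<notin> H" using clD unfolding closedS_def by blast
      qed
      show "{x,y} \<in> G \<longleftrightarrow> {F x, F y} \<in> H"
      proof (cases "x \<in> C")
        case xC: True
        show ?thesis
        proof (cases "y \<in> C")
          case True then show ?thesis using xC g(3) unfolding F_def by simp
        next
          case False then show ?thesis using mixed[OF xC] y by blast
        qed
      next
        case xC: False
        show ?thesis
        proof (cases "y \<in> C")
          case True then show ?thesis using mixed[OF True] x xC by (metis Diff_iff insert_commute)
        next
          case False
          have "{x,y} \<inter> C = {}" using xC False by blast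
          moreover have "{f' x, f' y} \<inter> D = {}" using f'(1) x y xC False unfolding bij_betw_def by blast
          ultimately show ?thesis using f'(2) x y xC False unfolding F_def G'_def H'_def by auto
        qed
      qed
    qed
    then show ?thesis using bF by blast
  qed
qed



definition famB :: "nat \<Rightarrow> nat set set set" where
  "famB n = {F. F \<subseteq> all_edges n \<and> card F = 4 \<and>
     (\<exists>a\<in>PiE {..<5::nat} (\<lambda>_. {..<n}). \<Union>F \<subseteq> a ` {..<5})}"

lemma wfg_all: "E \<subseteq> all_edges n \<Longrightarrow> wfg E {..<n}"
  unfolding wfg_def all_edges_def by auto

lemma ball_small: "E \<subseteq> all_edges n \<Longrightarrow> ball E r v \<subseteq> insert v {..<n}"
proof (cases "v < n")
  case True
  assume "E \<subseteq> all_edges n"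
  then show ?thesis using ball_subset_V[OF wfg_all, of E n v r] True by auto
next
  case False
  assume E: "E \<subseteq> all_edges n"
  have "\<forall>e\<in>E. v \<notin> e" using E False unfolding all_edges_def by auto
  then show ?thesis using ball_isolated by simp
qed

lemma finite_ball: "E \<subseteq> all_edges n \<Longrightarrow> finite (ball E r v)"
  by (rule finite_subset[OF ball_small]) simp_all

lemma cover_tuple:
  assumes "finite T" "T \<subseteq> {..<n}" "card T \<le> 5" "v \<in> T"
  shows "\<exists>a\<in>PiE {..<5::nat} (\<lambda>_. {..<n}). T \<subseteq> a ` {..<5}"
proof -
  obtain h where h: "bij_betw h {0..<card T} T" using ex_bij_betw_nat_finite[OF assms(1)] by blast
  define a where "a = restrict (\<lambda>i. if i < card T then h i else v) {..<5}"
  have hT: "\<forall>i<card T. h i \<in> T" using h by (auto simp: bij_betw_def)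
  have "a \<in> PiE {..<5} (\<lambda>_. {..<n})"
    using hT assms(2,4) by (auto simp: a_def subset_eq)
  moreover have "T \<subseteq> a ` {..<5}"
  proof
    fix t assume "t \<in> T"
    then obtain i where i: "i < card T" "t = h i" using h unfolding bij_betw_def by (metis atLeastLessThan_iff imageE)
    then have "a i = t" "i < 5" unfolding a_def using assms(3) by auto
    then show "t \<in> a ` {..<5}" by force
  qed
  ultimately show ?thesis by blast
qed

lemma bad_witness:
  assumes E: "E \<subseteq> all_edges n" and ng: "\<not> good E"
  shows "\<exists>F\<in>famB n. F \<subseteq> E"
proof -
  have wf: "wfg E {..<n}" using wfg_all[OF E] .
  obtain v where "\<not> (finite (ball E 2 v) \<and> card (ball E 2 v) \<le> 4)" using ng unfolding good_def by blast
  then have v5: "card (ball E 2 v) > 4" using finite_ball[OF E] by auto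
  define B where "B = ball E 2 v"
  have fB: "finite B" unfolding B_def using finite_ball[OF E] .
  have vn: "v < n"
  proof (rule ccontr)
    assume "\<not> v < n"
    then have "\<forall>e\<in>E. v \<notin> e" using E unfolding all_edges_def by auto
    then have "B = {v}" unfolding B_def using ball_isolated by simp
    then show False using v5 unfolding B_def by simp
  qed
  have Bn: "B \<subseteq> {..<n}" unfolding B_def using ball_subset_V[OF wf, of v 2] vn by simp
  define N1 where "N1 = {u. {v,u} \<in> E}"
  define N2 where "N2 = B - insert v N1"
  have vN1: "v \<notin> N1" unfolding N1_def using edge_neq[OF wf] by blast
  have N1B: "insert v N1 \<subseteq> B" unfolding B_def N1_def by (auto simp: mem_ball2)
  have fN1: "finite N1" using finite_subset[OF N1B fB] by simp
  have fN2: "finite N2" unfolding N2_def using fB by simp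
  have cB: "card B = 1 + card N1 + card N2"
  proof -
    have "B = insert v N1 \<union> N2" unfolding N2_def using N1B by blast
    moreover have "insert v N1 \<inter> N2 = {}" unfolding N2_def by blast
    ultimately have "card B = card (insert v N1) + card N2" using fN1 fN2 card_Un_disjoint[of "insert v N1" N2] by simp
    then show ?thesis using vN1 fN1 by simp
  qed
  have par_ex: "\<exists>u. u \<in> N1 \<and> {u,z} \<in> E" if z: "z \<in> N2" for z
  proof -
    have "z \<in> ball E 2 v" "z \<noteq> v" "{v,z} \<notin> E" using z unfolding N2_def N1_def B_def by auto
    then show ?thesis unfolding mem_ball2 N1_def by blast
  qed
  define par where "par = (\<lambda>z. SOME u. u \<in> N1 \<and> {u,z} \<in> E)"
  have par: "par z \<in> N1 \<and> {par z, z} \<in> E" if "z \<in> N2" for z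
    unfolding par_def using someI_ex[OF par_ex[OF that]] .
  define k where "k = min 4 (card N1)"
  obtain U where U: "U \<subseteq> N1" "card U = k" "finite U"
    using obtain_subset_with_card_n[of k N1] unfolding k_def by auto
  have k2: "4 - k \<le> card N2" using cB v5 unfolding k_def B_def by auto
  obtain W where W: "W \<subseteq> N2" "card W = 4 - k" "finite W"
    using obtain_subset_with_card_n[OF k2] by auto
  have k4: "k \<le> 4" unfolding k_def by simp
  define F1 where "F1 = (\<lambda>u. {v,u}) ` U"
  define F2 where "F2 = (\<lambda>z. {par z, z}) ` W"
  define F where "F = F1 \<union> F2"
  have inj1: "inj_on (\<lambda>u. {v,u}) U"
    unfolding inj_on_def using U(1) vN1 by (auto simp: doubleton_eq_iff)
  have N12: "N1 \<inter> N2 = {}" unfolding N2_def by blast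
  have inj2: "inj_on (\<lambda>z. {par z, z}) W"
  proof (rule inj_onI)
    fix z z' assume zz: "z \<in> W" "z' \<in> W" "{par z, z} = {par z', z'}"
    have "par z' \<in> N1" "z \<in> N2" using par zz W(1) by auto
    then have "z \<noteq> par z'" using N12 by blast
    then show "z = z'" using zz(3) by (auto simp: doubleton_eq_iff)
  qed
  have c1: "card F1 = k" unfolding F1_def using card_image[OF inj1] U(2) by simp
  have c2: "card F2 = 4 - k" unfolding F2_def using card_image[OF inj2] W(2) by simp
  have dis: "F1 \<inter> F2 = {}"
  proof -
    have "v \<notin> e" if "e \<in> F2" for e
    proof -
      obtain z where z: "z \<in> W" "e = {par z, z}" using \<open>e \<in> F2\<close> unfolding F2_def by blast
      have "par z \<in> N1" "z \<in> N2" using par z W(1) by auto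
      then show ?thesis using z vN1 unfolding N2_def by auto
    qed
    moreover have "v \<in> e" if "e \<in> F1" for e using that unfolding F1_def by auto
    ultimately show ?thesis by blast
  qed
  have cF: "card F = 4" unfolding F_def
    using card_Un_disjoint[of F1 F2] c1 c2 dis k4 U(3) W(3) unfolding F1_def F2_def by simp
  have FE: "F \<subseteq> E" unfolding F_def F1_def F2_def using U(1) W(1) par unfolding N1_def by auto
  define T where "T = insert v (U \<union> W)"
  have TB: "T \<subseteq> B" unfolding T_def using U(1) W(1) N1B unfolding N2_def by auto
  have UN: "U = N1" if "W \<noteq> {}"
  proof -
    have "card W > 0" using that W(3) by (simp add: card_gt_0_iff)
    then have "k = card N1" using W(2) unfolding k_def by auto
    then show ?thesis using card_subset_eq[OF fN1 U(1)] U(2) by simp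
  qed
  have UF: "\<Union>F \<subseteq> T"
  proof
    fix x assume "x \<in> \<Union>F"
    then obtain e where e: "e \<in> F" "x \<in> e" by blast
    show "x \<in> T"
    proof (cases "e \<in> F1")
      case True then show ?thesis using e unfolding F1_def T_def by auto
    next
      case False
      then obtain z where z: "z \<in> W" "e = {par z, z}" using e unfolding F_def F2_def by blast
      then have "par z \<in> U" using UN par W(1) by blast
      then show ?thesis using z e unfolding T_def by auto
    qed
  qed
  have fT: "finite T" unfolding T_def using U(3) W(3) by simp
  have cT: "card T \<le> 5"
  proof -
    have "card T \<le> Suc (card (U \<union> W))" unfolding T_def using U(3) W(3) by (simp add: card_insert_if)
    also have "\<dots> \<le> Suc (card U + card W)" using card_Un_le by simp
    finally show ?thesis using U(2) W(2) k4 by simp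
  qed
  obtain a where a: "a \<in> PiE {..<5::nat} (\<lambda>_. {..<n})" "T \<subseteq> a ` {..<5}"
    using cover_tuple[OF fT _ cT] TB Bn unfolding T_def by blast
  have "F \<in> famB n" unfolding famB_def using FE E cF UF a by blast
  then show ?thesis using FE by blast
qed

lemma card_famB: "finite (famB n) \<and> card (famB n) \<le> 2^32 * n^5"
proof -
  let ?P = "PiE {..<5} (\<lambda>_::nat. {..<n::nat})"
  have fP: "finite ?P" by (simp add: finite_PiE)
  have cP: "card ?P = n^5" by (simp add: card_PiE)
  have sub: "famB n \<subseteq> (\<Union>a\<in>?P. Pow (Pow (a ` {..<5})))" unfolding famB_def by blast
  have fU: "finite (\<Union>a\<in>?P. Pow (Pow (a ` {..<5})))" using fP by simp
  have each: "card (Pow (Pow (a ` {..<5::nat}))) \<le> 2^32" for a :: "nat \<Rightarrow> nat"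
  proof -
    have "card (a ` {..<5::nat}) \<le> 5" using card_image_le[of "{..<5::nat}" a] by simp
    then have "(2::nat) ^ card (a ` {..<5::nat}) \<le> 2^5" by (rule power_increasing) simp
    then have "(2::nat) ^ (2 ^ card (a ` {..<5::nat})) \<le> 2 ^ (2^5)" by (rule power_increasing) simp
    then show ?thesis by (simp add: card_Pow)
  qed
  have "card (famB n) \<le> card (\<Union>a\<in>?P. Pow (Pow (a ` {..<5})))" by (rule card_mono[OF fU sub])
  also have "\<dots> \<le> (\<Sum>a\<in>?P. card (Pow (Pow (a ` {..<5}))))" by (rule card_UN_le[OF fP])
  also have "\<dots> \<le> (\<Sum>a\<in>?P. 2^32)" by (rule sum_mono) (rule each)
  also have "\<dots> = 2^32 * n^5" using cP by simp
  finally show ?thesis using finite_subset[OF sub fU] by simp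
qed



lemma sub_prob:
  fixes p :: real
  assumes fA: "finite A" and FA: "F \<subseteq> A"
  shows "(\<Sum>E\<in>Pow A. if F \<subseteq> E then p ^ card E * (1 - p) ^ (card A - card E) else 0) = p ^ card F"
proof -
  have fF: "finite F" using finite_subset[OF FA fA] .
  have "(\<Prod>x\<in>A. p + (if x \<in> F then 0 else 1 - p)) = (\<Prod>x\<in>A. if x \<in> F then p else 1)"
    by (rule prod.cong) auto
  also have "\<dots> = p ^ card F"
    using prod.If_cases[OF fA, of "\<lambda>x. x \<in> F" "\<lambda>_. p" "\<lambda>_. 1"] FA
    by (simp add: Int_absorb1 Int_commute)
  finally have L: "(\<Prod>x\<in>A. p + (if x \<in> F then 0 else 1 - p)) = p ^ card F" .
  have R: "(\<Prod>x\<in>X. p) * (\<Prod>x\<in>A - X. if x \<in> F then 0 else 1 - p) =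
           (if F \<subseteq> X then p ^ card X * (1 - p) ^ (card A - card X) else 0)" if X: "X \<in> Pow A" for X
  proof (cases "F \<subseteq> X")
    case True
    have "(\<Prod>x\<in>A - X. if x \<in> F then 0 else 1 - p) = (\<Prod>x\<in>A - X. 1 - p)"
      by (rule prod.cong) (use True in auto)
    also have "\<dots> = (1 - p) ^ (card A - card X)"
      using X fA by (simp add: card_Diff_subset finite_subset)
    finally show ?thesis using True by simp
  next
    case False
    then obtain y where y: "y \<in> F" "y \<notin> X" by blast
    have "(\<Prod>x\<in>A - X. if x \<in> F then 0 else 1 - p) = 0"
      using y FA fA by (subst prod_zero_iff) auto
    then show ?thesis using False by simp
  qed
  have "p ^ card F = (\<Sum>X\<in>Pow A. (\<Prod>x\<in>X. p) * (\<Prod>x\<in>A - X. if x \<in> F then 0 else 1 - p))"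
    using L prod_add[OF fA, of "\<lambda>_. p" "\<lambda>x. if x \<in> F then 0 else 1 - p"] by simp
  also have "\<dots> = (\<Sum>E\<in>Pow A. if F \<subseteq> E then p ^ card E * (1 - p) ^ (card A - card E) else 0)"
    by (rule sum.cong[OF refl]) (rule R)
  finally show ?thesis by simp
qed

lemma prob_lower:
  fixes p :: real
  assumes p: "0 \<le> p" "p \<le> 1"
    and fam: "finite Fm" "Fm \<subseteq> Pow (all_edges n)"
    and cov: "\<And>E. E \<in> graphs_on n \<Longrightarrow> \<not> P E \<Longrightarrow> \<exists>F\<in>Fm. F \<subseteq> E"
  shows "1 - (\<Sum>F\<in>Fm. p ^ card F) \<le> gnp_prob n p P \<and> gnp_prob n p P \<le> 1"
proof -
  define A where "A = all_edges n"
  have fA: "finite A" unfolding A_def all_edges_def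
    by (rule finite_subset[of _ "Pow {..<n}"]) auto
  define w where "w = (\<lambda>E::nat set set. p ^ card E * (1 - p) ^ (card A - card E))"
  have w0: "w E \<ge> 0" for E unfolding w_def using p by simp
  have tot: "(\<Sum>E\<in>Pow A. w E) = 1"
    using sub_prob[OF fA, of "{}" p] unfolding w_def by simp
  have gp: "gnp_prob n p P = (\<Sum>E\<in>Pow A. if P E then w E else 0)"
    unfolding gnp_prob_def graphs_on_def A_def w_def by simp
  have split: "(\<Sum>E\<in>Pow A. w E) = (\<Sum>E\<in>Pow A. if P E then w E else 0) + (\<Sum>E\<in>Pow A. if P E then 0 else w E)"
    by (subst sum.distrib[symmetric]) (rule sum.cong, auto)
  have "(\<Sum>E\<in>Pow A. if P E then 0 else w E) \<le> (\<Sum>E\<in>Pow A. \<Sum>F\<in>Fm. if F \<subseteq> E then w E else 0)"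
  proof (rule sum_mono)
    fix E assume E: "E \<in> Pow A"
    show "(if P E then 0 else w E) \<le> (\<Sum>F\<in>Fm. if F \<subseteq> E then w E else 0)"
    proof (cases "P E")
      case True then show ?thesis using w0 by (simp add: sum_nonneg)
    next
      case False
      then obtain F where F: "F \<in> Fm" "F \<subseteq> E" using cov E unfolding graphs_on_def A_def by blast
      have "(if F \<subseteq> E then w E else 0) \<le> (\<Sum>F\<in>Fm. if F \<subseteq> E then w E else 0)"
        by (rule member_le_sum[OF F(1) _ fam(1)]) (simp add: w0)
      then show ?thesis using F False by simp
    qed
  qed
  also have "\<dots> = (\<Sum>F\<in>Fm. \<Sum>E\<in>Pow A. if F \<subseteq> E then w E else 0)" by (rule sum.swap)
  also have "\<dots> = (\<Sum>F\<in>Fm. p ^ card F)"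
  proof (rule sum.cong[OF refl])
    fix F assume "F \<in> Fm"
    then have "F \<subseteq> A" using fam(2) unfolding A_def by blast
    then show "(\<Sum>E\<in>Pow A. if F \<subseteq> E then w E else 0) = p ^ card F"
      unfolding w_def by (rule sub_prob[OF fA])
  qed
  finally have up: "(\<Sum>E\<in>Pow A. if P E then 0 else w E) \<le> (\<Sum>F\<in>Fm. p ^ card F)" .
  have nn: "(\<Sum>E\<in>Pow A. if P E then 0 else w E) \<ge> 0" using w0 by (simp add: sum_nonneg)
  show ?thesis using gp split tot up nn by linarith
qed



lemma recon_of_good:
  assumes G: "G \<in> graphs_on n" and g: "good G"
  shows "reconstructible n 2 G"
  unfolding reconstructible_def
proof (intro ballI impI)
  fix H assume H: "H \<in> graphs_on n" and sn: "same_nbhds n 2 G H"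
  obtain \<phi> where \<phi>: "bij_betw \<phi> {..<n} {..<n}" "\<forall>v\<in>{..<n}. nbhd_iso G H 2 v (\<phi> v)"
    using sn unfolding same_nbhds_def by blast
  have GE: "G \<subseteq> all_edges n" and HE: "H \<subseteq> all_edges n" using G H unfolding graphs_on_def by auto
  have gH: "good H" unfolding good_def
  proof
    fix w
    show "finite (ball H 2 w) \<and> card (ball H 2 w) \<le> 4"
    proof (cases "w < n")
      case True
      then obtain v where v: "v < n" "w = \<phi> v" using \<phi>(1) unfolding bij_betw_def by (metis imageE lessThan_iff)
      have "nbhd_iso G H 2 v w" using \<phi>(2) v by simp
      then obtain f where "bij_betw f (ball G 2 v) (ball H 2 w)" unfolding nbhd_iso_def by blast
      then have "card (ball H 2 w) = card (ball G 2 v)" by (simp add: bij_betw_same_card)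
      then show ?thesis using g finite_ball[OF HE] unfolding good_def by simp
    next
      case False
      then have "\<forall>e\<in>H. w \<notin> e" using HE unfolding all_edges_def by auto
      then show ?thesis using ball_isolated by simp
    qed
  qed
  obtain f where "bij_betw f {..<n} {..<n}" "\<forall>x\<in>{..<n}. \<forall>y\<in>{..<n}. {x,y} \<in> G \<longleftrightarrow> {f x, f y} \<in> H"
    using main_recon[OF _ wfg_all[OF GE] wfg_all[OF HE] g gH \<phi>] by auto
  then show "graph_iso n G H" unfolding graph_iso_def by blast
qed

lemma bound_n:
  fixes p :: real
  assumes "0 \<le> p" "p \<le> 1"
  shows "1 - 2^32 * (real n ^ 5 * p ^ 4) \<le> gnp_prob n p (reconstructible n 2) \<and>
         gnp_prob n p (reconstructible n 2) \<le> 1"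
proof -
  have fam: "finite (famB n)" "famB n \<subseteq> Pow (all_edges n)" using card_famB unfolding famB_def by auto
  have cov: "\<exists>F\<in>famB n. F \<subseteq> E" if "E \<in> graphs_on n" "\<not> reconstructible n 2 E" for E
    using that recon_of_good bad_witness unfolding graphs_on_def by blast
  have pl: "1 - (\<Sum>F\<in>famB n. p ^ card F) \<le> gnp_prob n p (reconstructible n 2) \<and> gnp_prob n p (reconstructible n 2) \<le> 1"
    by (rule prob_lower[OF assms fam cov]) auto
  have "(\<Sum>F\<in>famB n. p ^ card F) = (\<Sum>F\<in>famB n. p ^ 4)"
    by (rule sum.cong) (auto simp: famB_def)
  also have "\<dots> = real (card (famB n)) * p ^ 4" by simp
  also have "\<dots> \<le> real (2^32 * n^5) * p ^ 4"
    by (rule mult_right_mono) (use card_famB[of n] assms in \<open>simp_all del: of_nat_mult of_nat_power\<close>)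
  also have "\<dots> = 2^32 * (real n ^ 5 * p ^ 4)" by simp
  finally show ?thesis using pl by linarith
qed

theorem theorem1p5:
  fixes p :: "nat \<Rightarrow> real"
  assumes "\<And>n. 0 \<le> p n \<and> p n \<le> 1"
    and "p \<in> o(\<lambda>n. real n powr (-5/4))"
  shows "(\<lambda>n. gnp_prob n (p n) (reconstructible n 2)) \<longlonglongrightarrow> 1"
proof -
  define q where "q = (\<lambda>n. p n / real n powr (-5/4))"
  have q0: "q \<longlonglongrightarrow> 0" unfolding q_def using smalloD_tendsto[OF assms(2)] .
  have eq: "q n ^ 4 = real n ^ 5 * p n ^ 4" if "n \<ge> 1" for n
  proof -
    have pos: "real n > 0" using that by simp
    have a: "(real n powr (-5/4)) ^ 4 = real n powr (of_nat 4 * (-5/4))"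
      by (rule powr_power) (use pos in simp)
    have b: "(of_nat 4 * (-5/4) :: real) = - 5" by simp
    have c: "real n powr (- 5) = inverse (real n ^ 5)"
      unfolding powr_minus using pos by simp
    have d: "(real n powr (-5/4)) ^ 4 = inverse (real n ^ 5)" using a b c by simp
    have "q n ^ 4 = p n ^ 4 / (real n powr (-5/4)) ^ 4" unfolding q_def by (rule power_divide)
    also have "\<dots> = p n ^ 4 * real n ^ 5" unfolding d by (simp add: divide_inverse)
    finally show ?thesis by simp
  qed
  have t1: "(\<lambda>n. q n ^ 4) \<longlonglongrightarrow> 0" using tendsto_power[OF q0, of 4] by simp
  have t2: "(\<lambda>n. real n ^ 5 * p n ^ 4) \<longlonglongrightarrow> 0"
    by (rule Lim_transform_eventually[OF t1]) (use eq in \<open>auto intro: eventually_sequentiallyI\<close>)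
  have t3: "(\<lambda>n. 1 - 2^32 * (real n ^ 5 * p n ^ 4)) \<longlonglongrightarrow> 1"
    using tendsto_diff[OF tendsto_const[of 1] tendsto_mult_right_zero[OF t2, of "2^32"]] by simp
  show ?thesis
  proof (rule tendsto_sandwich[OF _ _ t3 tendsto_const[of 1]])
    show "\<forall>\<^sub>F n in sequentially. 1 - 2^32 * (real n ^ 5 * p n ^ 4) \<le> gnp_prob n (p n) (reconstructible n 2)"
      using bound_n assms(1) by (intro always_eventually) blast
    show "\<forall>\<^sub>F n in sequentially. gnp_prob n (p n) (reconstructible n 2) \<le> 1"
      using bound_n assms(1) by (intro always_eventually) blast
  qed
qed


end
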